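(* In the setting of the context, let $\Lambda$ be a linear relation in the vertex space $\mathcal F$ and $$\Lambda_C=\{(V_CW^{-1}f',\ V_CW^{-1}f):\ (f,f')\in\Lambda\}\subset\mathcal G\oplus\mathcal G.$$ Let $D^{\Lambda_W}$ be the restriction of $D^{max}$ to $\{\Phi\in\widetilde H^1(\mathbf G;\mathbb C^2):(W\Gamma^1\Phi,W\Gamma^2\Phi)\in\Lambda\}$ and $D^{\Lambda_C}$ the restriction of $D^{max}$ to $\{\Phi\in\widetilde H^1(\mathbf G;\mathbb C^2):(\Gamma^1\Phi,\Gamma^2\Phi)\in\Lambda_C\}$. Then $$D^{\Lambda_C}C=-CD^{\Lambda_W}.$$
   Context: Let $m\ge0$. A finite oriented metric graph $\mathbf G$ has a finite nonempty vertex set $\mathcal V$, finite sets $\mathcal I$ (internal) and $\mathcal E$ (external) of edges, $\mathcal J=\mathcal I\cup\mathcal E\ne\emptyset$, no loops. Each internal edge $i$ is identified with $I_i=(a_i,b_i)$, $a_i$ and $b_i$ corresponding to its initial and terminal vertex. An external edge $e$ is identified with $(a_e,+\infty)$ ($\rho(e)=-1$) or $(-\infty,b_e)$ ($\rho(e)=1$), finite endpoint $\partial e$ corresponding to its vertex. $\mathscr H=\bigoplus_jL^2(I_j;\mathbb C^2)$, $\widetilde H^1=\bigoplus_jH^1(I_j;\mathbb C^2)$, $\Phi=(\phi_j)_j$; $D^{max}$ acts edgewise by $-i\sigma_1\phi_j'+m\sigma_3\phi_j$ ($\sigma_1=\begin{pmatrix}0&1\\1&0\end{pmatrix}$, $\sigma_3=\operatorname{diag}(1,-1)$).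 $\mathcal G=\bigoplus_j\mathcal G_j$, $\mathcal G_i=\mathbb C^2$, $\mathcal G_e=\mathbb C$; $\Gamma^k=\bigoplus_j\Gamma^k_j$, $\Gamma^1_i\Phi=(\phi_i^1(a_i),\phi_i^1(b_i))^T$, $\Gamma^2_i\Phi=(i\phi_i^2(a_i),-i\phi_i^2(b_i))^T$, $\Gamma^1_e\Phi=\phi_e^1(\partial e)$, $\Gamma^2_e\Phi=-i\rho(e)\phi^2_e(\partial e)$. Vertex space $\mathcal F=\bigoplus_v\mathbb C^{\deg v}$; coordinates of $\mathcal G$ and $\mathcal F$ are labelled by pairs $(j,v)$, $v$ a vertex endpoint of $j$, ordered in $\mathcal G$ edge by edge (initial vertex first for internal edges) and in $\mathcal F$ vertex by vertex (then by the fixed edge order); $W:\mathcal G\to\mathcal F$ is the permutation matrix sending coordinate $(j,v)$ of $\mathcal G$ to coordinate $(j,v)$ of $\mathcal F$. $C\Phi=(\sigma_1\overline{\phi_j})_j$ (antilinear). $V_C=\bigoplus_jV_{C,j}$ is the antilinear map on $\mathcal G$ with $V_{C,j}\omega_j=i\sigma_3\overline{\omega_j}$ for $j\in\mathcal I$ and $V_{C,j}\omega_j=-i\rho(j)\overline{\omega_j}$ for $j\in\mathcal E$. *)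

theory Defs
  imports "HOL-Analysis.Analysis"
begin

text \<open>Edges are numbered 0..<nE (this numbering is the fixed
edge order), vertices 0..<nV (the fixed vertex order). Edges in intE are internal,
the remaining edges in {..<nE} are external. Internal edge j is (ea j, eb j) with initial
vertex eini j and terminal vertex eter j. External edge j has finite endpoint ec j, vertex
evx j and orientation erho j: (ec j, +inf) if erho j = -1, (-inf, ec j) if erho j = 1.\<close>

record mgraph =
  nE :: nat
  nV :: nat
  intE :: "nat set"
  ea :: "nat \<Rightarrow> real"
  eb :: "nat \<Rightarrow> real"
  eini :: "nat \<Rightarrow> nat"
  eter :: "nat \<Rightarrow> nat"
  ec :: "nat \<Rightarrow> real"
  erho :: "nat \<Rightarrow> real"
  evx :: "nat \<Rightarrow> nat"

definition valid_graph :: "mgraph \<Rightarrow> bool" where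
  "valid_graph G \<longleftrightarrow> 0 < nV G \<and> 0 < nE G \<and> intE G \<subseteq> {..<nE G} \<and>
    (\<forall>j\<in>intE G. ea G j < eb G j \<and> eini G j < nV G \<and> eter G j < nV G \<and> eini G j \<noteq> eter G j) \<and>
    (\<forall>j\<in>{..<nE G} - intE G. evx G j < nV G \<and> (erho G j = -1 \<or> erho G j = 1))"

definition edge_int :: "mgraph \<Rightarrow> nat \<Rightarrow> real set" where
  "edge_int G j = (if j \<in> intE G then {ea G j<..<eb G j}
                   else if erho G j = -1 then {ec G j<..} else {..<ec G j})"

definition endpts :: "mgraph \<Rightarrow> nat \<Rightarrow> nat set" where
  "endpts G j = (if j \<in> intE G then {eini G j, eter G j} else {evx G j})"

text \<open>Coordinate labels (j,v) of the space G (edge by edge, initial vertex first) and of the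
vertex space F (vertex by vertex, then by edge order).\<close>

definition labG :: "mgraph \<Rightarrow> (nat \<times> nat) list" where
  "labG G = concat (map (\<lambda>j. if j \<in> intE G then [(j, eini G j), (j, eter G j)] else [(j, evx G j)])
                       [0..<nE G])"

definition labF :: "mgraph \<Rightarrow> (nat \<times> nat) list" where
  "labF G = concat (map (\<lambda>v. map (\<lambda>j. (j, v)) (filter (\<lambda>j. v \<in> endpts G j) [0..<nE G])) [0..<nV G])"

type_synonym cvec = "nat \<Rightarrow> complex"

text \<open>Finite-dimensional coordinate space C^n, as vectors with zero entries beyond n.\<close>
definition vspace :: "nat \<Rightarrow> cvec set" where
  "vspace n = {f. \<forall>p\<ge>n. f p = 0}"

definition linear_relation :: "nat \<Rightarrow> (cvec \<times> cvec) set \<Rightarrow> bool" where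
  "linear_relation n L \<longleftrightarrow> L \<subseteq> vspace n \<times> vspace n \<and> (\<lambda>_. 0, \<lambda>_. 0) \<in> L \<and>
     (\<forall>x\<in>L. \<forall>y\<in>L. ((\<lambda>p. fst x p + fst y p), (\<lambda>p. snd x p + snd y p)) \<in> L) \<and>
     (\<forall>c::complex. \<forall>x\<in>L. ((\<lambda>p. c * fst x p), (\<lambda>p. c * snd x p)) \<in> L)"

definition endpt_pt :: "mgraph \<Rightarrow> nat \<Rightarrow> nat \<Rightarrow> real" where
  "endpt_pt G j v = (if j \<in> intE G then (if v = eini G j then ea G j else eb G j) else ec G j)"

definition gamma2_coef :: "mgraph \<Rightarrow> nat \<Rightarrow> nat \<Rightarrow> complex" where
  "gamma2_coef G j v = (if j \<in> intE G then (if v = eini G j then \<i> else - \<i>)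
                        else - \<i> * complex_of_real (erho G j))"

definition VC_coef :: "mgraph \<Rightarrow> nat \<Rightarrow> nat \<Rightarrow> complex" where
  "VC_coef G j v = (if j \<in> intE G then (if v = eini G j then \<i> else - \<i>)
                    else - \<i> * complex_of_real (erho G j))"

type_synonym gfun = "nat \<Rightarrow> real \<Rightarrow> complex \<times> complex"

definition Gamma1 :: "mgraph \<Rightarrow> gfun \<Rightarrow> cvec" where
  "Gamma1 G \<Phi> = (\<lambda>q. if q < length (labG G)
      then (case labG G ! q of (j, v) \<Rightarrow> fst (\<Phi> j (endpt_pt G j v))) else 0)"

definition Gamma2 :: "mgraph \<Rightarrow> gfun \<Rightarrow> cvec" where
  "Gamma2 G \<Phi> = (\<lambda>q. if q < length (labG G)
      then (case labG G ! q of (j, v) \<Rightarrow> gamma2_coef G j v * snd (\<Phi> j (endpt_pt G j v))) else 0)"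

definition VC :: "mgraph \<Rightarrow> cvec \<Rightarrow> cvec" where
  "VC G \<omega> = (\<lambda>q. if q < length (labG G)
      then (case labG G ! q of (j, v) \<Rightarrow> VC_coef G j v * cnj (\<omega> q)) else 0)"

definition Wm :: "mgraph \<Rightarrow> cvec \<Rightarrow> cvec" where
  "Wm G g = (\<lambda>p. if p < length (labF G)
      then g (THE q. q < length (labG G) \<and> labG G ! q = labF G ! p) else 0)"

definition Winv :: "mgraph \<Rightarrow> cvec \<Rightarrow> cvec" where
  "Winv G f = (\<lambda>q. if q < length (labG G)
      then f (THE p. p < length (labF G) \<and> labF G ! p = labG G ! q) else 0)"

definition LambdaC :: "mgraph \<Rightarrow> (cvec \<times> cvec) set \<Rightarrow> (cvec \<times> cvec) set" where
  "LambdaC G L = {(VC G (Winv G f'), VC G (Winv G f)) | f f'. (f, f') \<in> L}"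

text \<open>L^2 on an interval, and H^1 (via the absolutely continuous representative, continuous
up to the finite endpoints, with L^2 derivative g).\<close>
definition L2_on :: "real set \<Rightarrow> (real \<Rightarrow> complex \<times> complex) \<Rightarrow> bool" where
  "L2_on S f \<longleftrightarrow> (\<lambda>x. indicator S x *\<^sub>R f x) \<in> borel_measurable lborel \<and>
                  integrable lborel (\<lambda>x. indicator S x * (norm (f x))\<^sup>2)"

definition H1_with_deriv :: "real set \<Rightarrow> (real \<Rightarrow> complex \<times> complex) \<Rightarrow> (real \<Rightarrow> complex \<times> complex) \<Rightarrow> bool" where
  "H1_with_deriv S f g \<longleftrightarrow> L2_on S f \<and> L2_on S g \<and> continuous_on (closure S) f \<and>
     (\<forall>x\<in>closure S. \<forall>y\<in>closure S. x \<le> y \<longrightarrow> (g has_integral (f y - f x)) {x..y})"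

text \<open>Charge conjugation C and the Dirac expression -i sigma1 phi' + m sigma3 phi.\<close>
definition Cop :: "gfun \<Rightarrow> gfun" where
  "Cop \<Phi> = (\<lambda>j x. (cnj (snd (\<Phi> j x)), cnj (fst (\<Phi> j x))))"

definition dirac_expr :: "real \<Rightarrow> complex \<times> complex \<Rightarrow> complex \<times> complex \<Rightarrow> complex \<times> complex" where
  "dirac_expr m \<phi> g = (- \<i> * snd g + complex_of_real m * fst \<phi>,
                        - \<i> * fst g - complex_of_real m * snd \<phi>)"

text \<open>Graph of the restriction of D^max to {Phi in H1 : bc (Gamma1 Phi) (Gamma2 Phi)};
the image is determined up to a.e. equality on each edge.\<close>
definition D_graph :: "mgraph \<Rightarrow> real \<Rightarrow> (cvec \<Rightarrow> cvec \<Rightarrow> bool) \<Rightarrow> (gfun \<times> gfun) set" where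
  "D_graph G m bc = {(\<Phi>, \<Psi>).
     (\<forall>j<nE G. L2_on (edge_int G j) (\<Psi> j) \<and>
        (\<exists>g. H1_with_deriv (edge_int G j) (\<Phi> j) g \<and>
             (AE x in lborel. x \<in> edge_int G j \<longrightarrow> \<Psi> j x = dirac_expr m (\<Phi> j x) (g x)))) \<and>
     bc (Gamma1 G \<Phi>) (Gamma2 G \<Phi>)}"

definition D_LambdaW :: "mgraph \<Rightarrow> real \<Rightarrow> (cvec \<times> cvec) set \<Rightarrow> (gfun \<times> gfun) set" where
  "D_LambdaW G m L = D_graph G m (\<lambda>x y. (Wm G x, Wm G y) \<in> L)"

definition D_LambdaC :: "mgraph \<Rightarrow> real \<Rightarrow> (cvec \<times> cvec) set \<Rightarrow> (gfun \<times> gfun) set" where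
  "D_LambdaC G m L = D_graph G m (\<lambda>x y. (x, y) \<in> LambdaC G L)"

end

theory Submission
  imports Defs
begin

definition cs :: "complex \<times> complex \<Rightarrow> complex \<times> complex" where
  "cs z = (cnj (snd z), cnj (fst z))"

lemma cs_cs[simp]: "cs (cs z) = z"
  by (simp add: cs_def)

lemma bl_cs: "bounded_linear cs"
  unfolding cs_def
  by (intro bounded_linear_Pair bounded_linear_compose[OF bounded_linear_cnj] bounded_linear_fst bounded_linear_snd)

lemma bl_ncs: "bounded_linear (\<lambda>z. - cs z)"
  using bounded_linear_minus[OF bl_cs] .

lemma norm_cs: "norm (cs z) = norm z"
  by (simp add: cs_def norm_prod_def add.commute)

lemma L2_map:
  assumes T: "bounded_linear T" and N: "\<And>z. norm (T z) = norm z" and f: "L2_on S f"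
  shows "L2_on S (\<lambda>x. T (f x))"
proof -
  interpret T: bounded_linear T by (rule T)
  have e: "(\<lambda>x. indicator S x *\<^sub>R T (f x)) = (\<lambda>x. T (indicator S x *\<^sub>R f x))"
    by (simp add: T.scale)
  have m: "(\<lambda>x. indicator S x *\<^sub>R f x) \<in> borel_measurable lborel"
    using f by (simp add: L2_on_def)
  have "(\<lambda>x. T (indicator S x *\<^sub>R f x)) \<in> borel_measurable lborel"
    by (rule borel_measurable_continuous_on[OF T.continuous_on[OF continuous_on_id] m])
  then show ?thesis using f unfolding L2_on_def e N by simp
qed

lemma H1_map:
  assumes T: "bounded_linear T" and f: "H1_with_deriv S f g"
    and N: "\<And>z. norm (T z) = norm z"
  shows "H1_with_deriv S (\<lambda>x. T (f x)) (\<lambda>x. T (g x))"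
proof -
  interpret T: bounded_linear T by (rule T)
  have "L2_on S (\<lambda>x. T (f x))" "L2_on S (\<lambda>x. T (g x))"
    using f N by (auto simp: H1_with_deriv_def intro!: L2_map[OF T])
  moreover have "continuous_on (closure S) (\<lambda>x. T (f x))"
    using f by (auto simp: H1_with_deriv_def intro!: T.continuous_on)
  moreover have "((\<lambda>x. T (g x)) has_integral (T (f y) - T (f x))) {x..y}"
    if "x \<in> closure S" "y \<in> closure S" "x \<le> y" for x y
    using has_integral_linear[OF _ T, of g "f y - f x" "{x..y}"] f that
    by (auto simp: H1_with_deriv_def T.diff comp_def)
  ultimately show ?thesis by (simp add: H1_with_deriv_def)
qed

lemma distinct_concat_key:
  assumes "distinct xs" "\<And>j. j \<in> set xs \<Longrightarrow> distinct (h j) \<and> (\<forall>p\<in>set (h j). k p = j)"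
  shows "distinct (concat (map h xs))"
  using assms
proof (induction xs)
  case Nil then show ?case by simp
next
  case (Cons a xs)
  have "set (h a) \<inter> set (concat (map h xs)) = {}"
  proof (rule ccontr)
    assume "set (h a) \<inter> set (concat (map h xs)) \<noteq> {}"
    then obtain x b where x: "x \<in> set (h a)" "b \<in> set xs" "x \<in> set (h b)" by auto
    have "k x = a" "k x = b" using Cons.prems(2) x by auto
    then show False using Cons.prems(1) x(2) by auto
  qed
  then show ?case using Cons by auto
qed

lemma set_labG: "set (labG G) = {(j, v). j < nE G \<and> v \<in> endpts G j}"
  unfolding labG_def endpts_def by (auto split: if_splits)

lemma set_labF: "set (labF G) = {(j, v). v < nV G \<and> j < nE G \<and> v \<in> endpts G j}"
  unfolding labF_def by auto

lemma set_lab_eq: "valid_graph G \<Longrightarrow> set (labF G) = set (labG G)"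
  unfolding set_labF set_labG valid_graph_def endpts_def by (auto split: if_splits)

lemma distinct_labG: "valid_graph G \<Longrightarrow> distinct (labG G)"
  unfolding labG_def
  by (rule distinct_concat_key[where k=fst]) (auto simp: valid_graph_def)

lemma distinct_labF: "distinct (labF G)"
  unfolding labF_def
  by (rule distinct_concat_key[where k=snd]) (auto simp: distinct_map inj_on_def)

lemma the_idx:
  assumes "distinct xs" "x \<in> set xs"
  shows "(THE q. q < length xs \<and> xs ! q = x) < length xs \<and> xs ! (THE q. q < length xs \<and> xs ! q = x) = x"
proof -
  have "\<exists>!q. q < length xs \<and> xs ! q = x"
    using assms by (auto simp: in_set_conv_nth nth_eq_iff_index_eq)
  then show ?thesis by (rule theI')
qed

lemma the_idx_eq:
  assumes "distinct xs" "q < length xs"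
  shows "(THE p. p < length xs \<and> xs ! p = xs ! q) = q"
  using assms by (auto simp: nth_eq_iff_index_eq)

lemma Winv_Wm:
  assumes "valid_graph G" "g \<in> vspace (length (labG G))"
  shows "Winv G (Wm G g) = g"
proof
  fix q
  show "Winv G (Wm G g) q = g q"
  proof (cases "q < length (labG G)")
    case True
    define p where "p = (THE p. p < length (labF G) \<and> labF G ! p = labG G ! q)"
    have p: "p < length (labF G)" "labF G ! p = labG G ! q"
      using the_idx[OF distinct_labF, of "labG G ! q" G] set_lab_eq[OF assms(1)] True
      unfolding p_def by auto
    have "(THE q'. q' < length (labG G) \<and> labG G ! q' = labF G ! p) = q"
      unfolding p(2) using the_idx_eq[OF distinct_labG[OF assms(1)] True] .
    then show ?thesis using True p unfolding Winv_def Wm_def p_def[symmetric] by simp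
  next
    case False
    then show ?thesis using assms(2) by (simp add: Winv_def vspace_def)
  qed
qed

lemma Wm_Winv:
  assumes "valid_graph G" "f \<in> vspace (length (labF G))"
  shows "Wm G (Winv G f) = f"
proof
  fix p
  show "Wm G (Winv G f) p = f p"
  proof (cases "p < length (labF G)")
    case True
    define q where "q = (THE q. q < length (labG G) \<and> labG G ! q = labF G ! p)"
    have q: "q < length (labG G)" "labG G ! q = labF G ! p"
      using the_idx[OF distinct_labG[OF assms(1)], of "labF G ! p"] set_lab_eq[OF assms(1)] True nth_mem[OF True]
      unfolding q_def by auto
    have "(THE p'. p' < length (labF G) \<and> labF G ! p' = labG G ! q) = p"
      unfolding q(2) using the_idx_eq[OF distinct_labF True] .
    then show ?thesis using True q unfolding Winv_def Wm_def q_def[symmetric] by simp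
  next
    case False
    then show ?thesis using assms(2) by (simp add: Wm_def vspace_def)
  qed
qed

lemma Winv_vspace: "Winv G f \<in> vspace (length (labG G))"
  by (simp add: Winv_def vspace_def)

lemma Wm_vspace: "Wm G f \<in> vspace (length (labF G))"
  by (simp add: Wm_def vspace_def)

lemma coef_unit:
  assumes "valid_graph G" "(j, v) \<in> set (labG G)"
  shows "VC_coef G j v * cnj (gamma2_coef G j v) = 1"
proof -
  have "j < nE G" using assms(2) by (simp add: set_labG)
  then have "j \<notin> intE G \<Longrightarrow> erho G j = -1 \<or> erho G j = 1"
    using assms(1) by (auto simp: valid_graph_def)
  then show ?thesis
    by (auto simp: VC_coef_def gamma2_coef_def)
qed

lemma VC_VC:
  assumes "valid_graph G" "w \<in> vspace (length (labG G))"
  shows "VC G (VC G w) = w"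
proof
  fix q
  show "VC G (VC G w) q = w q"
  proof (cases "q < length (labG G)")
    case True
    obtain j v where jv: "labG G ! q = (j, v)" by fastforce
    have "(j, v) \<in> set (labG G)" using True jv nth_mem by metis
    from coef_unit[OF assms(1) this] show ?thesis
      using True jv by (simp add: VC_def gamma2_coef_def VC_coef_def)
  next
    case False
    then show ?thesis using assms(2) by (simp add: VC_def vspace_def)
  qed
qed

lemma VC_vspace: "VC G w \<in> vspace (length (labG G))"
  by (simp add: VC_def vspace_def)

lemma Gamma_vspace: "Gamma1 G P \<in> vspace (length (labG G))" "Gamma2 G P \<in> vspace (length (labG G))"
  by (simp_all add: Gamma1_def Gamma2_def vspace_def)

lemma Gamma1_Cop:
  assumes "valid_graph G"
  shows "Gamma1 G (Cop P) = VC G (Gamma2 G P)"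
proof
  fix q
  show "Gamma1 G (Cop P) q = VC G (Gamma2 G P) q"
  proof (cases "q < length (labG G)")
    case True
    obtain j v where jv: "labG G ! q = (j, v)" by fastforce
    have "(j, v) \<in> set (labG G)" using True jv nth_mem by metis
    from coef_unit[OF assms(1) this] show ?thesis
      using True jv by (simp add: VC_def Gamma1_def Gamma2_def Cop_def)
  next
    case False
    then show ?thesis by (simp add: VC_def Gamma1_def)
  qed
qed

lemma Gamma2_Cop: "Gamma2 G (Cop P) = VC G (Gamma1 G P)"
  by (auto simp: VC_def Gamma1_def Gamma2_def Cop_def VC_coef_def gamma2_coef_def split: prod.splits)

lemma cs_minus[simp]: "cs (- z) = - cs z"
  by (simp add: cs_def)

lemma dirac_cs: "dirac_expr m (cs p) (cs g) = - cs (dirac_expr m p g)"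
  by (simp add: cs_def dirac_expr_def)

lemma Cop_cs2: "Cop P j = (\<lambda>x. cs (P j x))"
  by (simp add: Cop_def cs_def)

lemma norm_ncs: "norm (- cs z) = norm z"
  by (simp add: norm_cs)

lemma edge_equiv:
  "(L2_on S psi \<and> (\<exists>g. H1_with_deriv S (\<lambda>x. cs (f x)) g \<and>
      (AE x in lborel. x \<in> S \<longrightarrow> psi x = dirac_expr m (cs (f x)) (g x)))) \<longleftrightarrow>
   (L2_on S (\<lambda>x. - cs (psi x)) \<and> (\<exists>g. H1_with_deriv S f g \<and>
      (AE x in lborel. x \<in> S \<longrightarrow> - cs (psi x) = dirac_expr m (f x) (g x))))"
proof
  assume A: "L2_on S psi \<and> (\<exists>g. H1_with_deriv S (\<lambda>x. cs (f x)) g \<and>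
      (AE x in lborel. x \<in> S \<longrightarrow> psi x = dirac_expr m (cs (f x)) (g x)))"
  then obtain g where g: "H1_with_deriv S (\<lambda>x. cs (f x)) g"
    "AE x in lborel. x \<in> S \<longrightarrow> psi x = dirac_expr m (cs (f x)) (g x)" by blast
  have "L2_on S (\<lambda>x. - cs (psi x))" using L2_map[OF bl_ncs norm_ncs] A by blast
  moreover have "H1_with_deriv S f (\<lambda>x. cs (g x))"
    using H1_map[OF bl_cs g(1) norm_cs] by simp
  moreover have "AE x in lborel. x \<in> S \<longrightarrow> - cs (psi x) = dirac_expr m (f x) (cs (g x))"
    using g(2)
  proof (rule eventually_mono)
    fix x assume "x \<in> S \<longrightarrow> psi x = dirac_expr m (cs (f x)) (g x)"
    then show "x \<in> S \<longrightarrow> - cs (psi x) = dirac_expr m (f x) (cs (g x))"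
      using dirac_cs[of m "cs (f x)" "g x"] by auto
  qed
  ultimately show "L2_on S (\<lambda>x. - cs (psi x)) \<and> (\<exists>g. H1_with_deriv S f g \<and>
      (AE x in lborel. x \<in> S \<longrightarrow> - cs (psi x) = dirac_expr m (f x) (g x)))" by blast
next
  assume A: "L2_on S (\<lambda>x. - cs (psi x)) \<and> (\<exists>g. H1_with_deriv S f g \<and>
      (AE x in lborel. x \<in> S \<longrightarrow> - cs (psi x) = dirac_expr m (f x) (g x)))"
  then obtain g where g: "H1_with_deriv S f g"
    "AE x in lborel. x \<in> S \<longrightarrow> - cs (psi x) = dirac_expr m (f x) (g x)" by blast
  have "L2_on S psi" using L2_map[OF bl_ncs norm_ncs, of S "\<lambda>x. - cs (psi x)"] A by simp
  moreover have "H1_with_deriv S (\<lambda>x. cs (f x)) (\<lambda>x. cs (g x))"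
    using H1_map[OF bl_cs g(1) norm_cs] by simp
  moreover have "AE x in lborel. x \<in> S \<longrightarrow> psi x = dirac_expr m (cs (f x)) (cs (g x))"
    using g(2)
  proof (rule eventually_mono)
    fix x assume "x \<in> S \<longrightarrow> - cs (psi x) = dirac_expr m (f x) (g x)"
    show "x \<in> S \<longrightarrow> psi x = dirac_expr m (cs (f x)) (cs (g x))"
    proof
      assume "x \<in> S"
      then have "- cs (psi x) = dirac_expr m (f x) (g x)" using \<open>x \<in> S \<longrightarrow> _\<close> by blast
      then have "psi x = - cs (dirac_expr m (f x) (g x))" by (metis cs_cs cs_minus minus_minus)
      then show "psi x = dirac_expr m (cs (f x)) (cs (g x))" using dirac_cs[of m "f x" "g x"] by simp
    qed
  qed
  ultimately show "L2_on S psi \<and> (\<exists>g. H1_with_deriv S (\<lambda>x. cs (f x)) g \<and>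
      (AE x in lborel. x \<in> S \<longrightarrow> psi x = dirac_expr m (cs (f x)) (g x)))" by blast
qed

lemma bc_equiv:
  assumes "valid_graph G" "L \<subseteq> vspace (length (labF G)) \<times> vspace (length (labF G))"
  shows "(Gamma1 G (Cop P), Gamma2 G (Cop P)) \<in> LambdaC G L \<longleftrightarrow>
         (Wm G (Gamma1 G P), Wm G (Gamma2 G P)) \<in> L"
proof
  assume "(Gamma1 G (Cop P), Gamma2 G (Cop P)) \<in> LambdaC G L"
  then obtain f f' where ff: "(f, f') \<in> L" "VC G (Gamma2 G P) = VC G (Winv G f')"
    "VC G (Gamma1 G P) = VC G (Winv G f)"
    unfolding LambdaC_def Gamma1_Cop[OF assms(1)] Gamma2_Cop by blast
  have "Gamma2 G P = Winv G f'" "Gamma1 G P = Winv G f"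
    using arg_cong[OF ff(2), of "VC G"] arg_cong[OF ff(3), of "VC G"]
    by (simp_all add: VC_VC[OF assms(1)] Gamma_vspace Winv_vspace)
  moreover have "f \<in> vspace (length (labF G))" "f' \<in> vspace (length (labF G))"
    using ff(1) assms(2) by auto
  ultimately show "(Wm G (Gamma1 G P), Wm G (Gamma2 G P)) \<in> L"
    using ff(1) by (simp add: Wm_Winv[OF assms(1)])
next
  assume "(Wm G (Gamma1 G P), Wm G (Gamma2 G P)) \<in> L"
  then show "(Gamma1 G (Cop P), Gamma2 G (Cop P)) \<in> LambdaC G L"
    unfolding LambdaC_def Gamma1_Cop[OF assms(1)] Gamma2_Cop
    using Winv_Wm[OF assms(1) Gamma_vspace(1), of P] Winv_Wm[OF assms(1) Gamma_vspace(2), of P]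
    by (intro CollectI exI[of _ "Wm G (Gamma1 G P)"] exI[of _ "Wm G (Gamma2 G P)"]) simp
qed

theorem theorem4p20:
  fixes G :: mgraph and m :: real and L :: "(cvec \<times> cvec) set"
  assumes "valid_graph G" and "m \<ge> 0"
    and "linear_relation (length (labF G)) L"
  shows "\<forall>\<Phi> \<Psi>. (Cop \<Phi>, \<Psi>) \<in> D_LambdaC G m L \<longleftrightarrow> (\<Phi>, \<lambda>j x. - Cop \<Psi> j x) \<in> D_LambdaW G m L"
proof (intro allI)
  fix \<Phi> \<Psi> :: gfun
  have LV: "L \<subseteq> vspace (length (labF G)) \<times> vspace (length (labF G))"
    using assms(3) by (simp add: linear_relation_def)
  note bc = bc_equiv[OF assms(1) LV, of \<Phi>]
  note ed = edge_equiv[of "edge_int G j" "\<Psi> j" "\<Phi> j" m for j]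
  show "(Cop \<Phi>, \<Psi>) \<in> D_LambdaC G m L \<longleftrightarrow> (\<Phi>, \<lambda>j x. - Cop \<Psi> j x) \<in> D_LambdaW G m L"
    unfolding D_LambdaC_def D_LambdaW_def D_graph_def mem_Collect_eq case_prod_conv Cop_cs2 bc
    using ed by auto
qed

end
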